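(* Let $n$ be a positive integer and let $A(n)=(a_{ij})$, $p=p(n)$, $pp=pp(n)$, $b(n)$ be as in the context. Let $m\ge 1$ be an integer such that $\overline{p}=pm$ satisfies $\lfloor \overline{p}/2\rfloor> b(n)$, put $r=\lfloor\overline{p}/2\rfloor$, let $v$ be an integer with $v\ge pp+\overline{p}$, and let $B=(b_{ij})_{1\le i,j\le\overline{p}}$ be the $\overline{p}\times\overline{p}$ matrix with $b_{ij}=a_{v+i,v+j}$ if $i-r\le j\le i+r$; $b_{ij}=a_{v+i,v+j-\overline{p}}$ if $j>i+r$; $b_{ij}=a_{v+i,v+j+\overline{p}}$ if $j<i-r$. Then every row of $B$ contains exactly $n+1$ ones.
   Context: $\mathbb{N}=\{1,2,3,\dots\}$. Fix a positive integer $n$. The infinite $\{0,1\}$-matrix $A(n)=(a_{ij})_{i,j\in\mathbb{N}}$ is defined recursively. Its entries are determined row by row (row $1$ first), and within each row from left to right, so that $a_{kl}$ is determined after all $a_{ij}$ with $i<k$ and all $a_{kj}$ with $j<l$. One sets $a_{kl}=1$ if and only if all of the following hold: (1) $\sum_{j<l}a_{kj}<n+1$; (2) $\sum_{i<k}a_{il}<n+1$; (3) there is no pair $(i,j)$ with $1\le i<k$, $1\le j<l$ and $a_{ij}=a_{il}=a_{kj}=1$. Otherwise $a_{kl}=0$. The matrix $A(n)$ is eventually periodic along the diagonal: there exist $c\ge0$, $q\ge1$ with $a_{i+q,j+q}=a_{ij}$ for all $i>c$, $j\ge1$. The period $p=p(n)$ is the smallest $q\ge1$ for which such a $c$ exists,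 and the preperiod $pp=pp(n)$ is the smallest $c\ge 0$ with $a_{i+p,j+p}=a_{ij}$ for all $i>c$, $j\ge 1$. Define $b(n)=\max\{|j-i| : i,j\ge1,\ a_{ij}=1,\ i>pp(n)\}$. *)

theory Defs
  imports Main
begin

text \<open>Entry a_{kl} of the matrix A(n), indices k,l >= 1 (1-based; index 0 is
  outside the matrix and is set to False). True encodes the entry 1.\<close>

function aA :: "nat \<Rightarrow> nat \<Rightarrow> nat \<Rightarrow> bool" where
  "aA n k l =
    (if k = 0 \<or> l = 0 then False
     else (\<Sum>j\<in>{1..<l}. (if aA n k j then 1 else 0)) < n + 1
        \<and> (\<Sum>i\<in>{1..<k}. (if aA n i l then 1 else 0)) < n + 1
        \<and> \<not> (\<exists>i\<in>{1..<k}. \<exists>j\<in>{1..<l}. aA n i j \<and> aA n i l \<and> aA n k j))"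
  by pat_completeness auto
termination
  by (relation "inv_image (less_than <*lex*> less_than) (\<lambda>(n, k, l). (k, l))") auto

definition periodic_from :: "nat \<Rightarrow> nat \<Rightarrow> nat \<Rightarrow> bool" where
  "periodic_from n q c \<longleftrightarrow> (\<forall>i j. i > c \<and> j \<ge> 1 \<longrightarrow> aA n (i + q) (j + q) = aA n i j)"

definition period :: "nat \<Rightarrow> nat" where
  "period n = (LEAST q. q \<ge> 1 \<and> (\<exists>c. periodic_from n q c))"

definition preperiod :: "nat \<Rightarrow> nat" where
  "preperiod n = (LEAST c. periodic_from n (period n) c)"

definition bwidth :: "nat \<Rightarrow> nat" where
  "bwidth n = Max {nat \<bar>int j - int i\<bar> | i j. i \<ge> 1 \<and> j \<ge> 1 \<and> aA n i j \<and> i > preperiod n}"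

definition Bmat :: "nat \<Rightarrow> nat \<Rightarrow> nat \<Rightarrow> nat \<Rightarrow> nat \<Rightarrow> bool" where
  "Bmat n pbar v i j =
    (let r = pbar div 2 in
     if int i - int r \<le> int j \<and> int j \<le> int i + int r then aA n (v + i) (v + j)
     else if int j > int i + int r then aA n (v + i) (nat (int v + int j - int pbar))
     else aA n (v + i) (v + j + pbar))"

end

theory Submission
  imports Defs
begin

lemma sum_if_card: "(\<Sum>j\<in>A. (if P j then 1 else 0::nat)) = card {j\<in>A. P j}" if "finite A"
  using that by (simp add: sum.If_cases Int_def)

declare aA.simps[simp del]

lemma aA_iff: "aA n k l \<longleftrightarrow> k \<noteq> 0 \<and> l \<noteq> 0 \<and> card {j\<in>{1..<l}. aA n k j} < n + 1
   \<and> card {i\<in>{1..<k}. aA n i l} < n + 1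
   \<and> \<not> (\<exists>i\<in>{1..<k}. \<exists>j\<in>{1..<l}. aA n i j \<and> aA n i l \<and> aA n k j)"
  apply (subst aA.simps)
  apply (simp only: sum_if_card finite_atLeastLessThan)
  apply simp
  done


lemma aA_pos: "aA n k l \<Longrightarrow> k \<ge> 1 \<and> l \<ge> 1"
proof -
  assume "aA n k l"
  then have "k \<noteq> 0 \<and> l \<noteq> 0" using aA_iff[of n k l] by blast
  then show ?thesis by simp
qed

lemma row_prefix: "card {j\<in>{1..<l}. aA n k j} \<le> n + 1"
proof (induction l)
  case 0 then show ?case by simp
next
  case (Suc l)
  show ?case
  proof (cases "l \<ge> 1 \<and> aA n k l")
    case True
    have "{j\<in>{1..<Suc l}. aA n k j} = insert l {j\<in>{1..<l}. aA n k j}" using True by auto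
    moreover have "card {j\<in>{1..<l}. aA n k j} < n + 1" using True aA_iff[of n k l] by blast
    ultimately show ?thesis by simp
  next
    case False
    then have "{j\<in>{1..<Suc l}. aA n k j} = {j\<in>{1..<l}. aA n k j}" by (auto simp: less_Suc_eq)
    then show ?thesis using Suc by simp
  qed
qed

lemma col_prefix: "card {i\<in>{1..<k}. aA n i l} \<le> n + 1"
proof (induction k)
  case 0 then show ?case by simp
next
  case (Suc k)
  show ?case
  proof (cases "k \<ge> 1 \<and> aA n k l")
    case True
    have "{j\<in>{1..<Suc k}. aA n j l} = insert k {j\<in>{1..<k}. aA n j l}" using True by auto
    moreover have "card {j\<in>{1..<k}. aA n j l} < n + 1" using True aA_iff[of n k l] by blast
    ultimately show ?thesis by simp
  next
    case False
    then have "{j\<in>{1..<Suc k}. aA n j l} = {j\<in>{1..<k}. aA n j l}" by (auto simp: less_Suc_eq)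
    then show ?thesis using Suc by simp
  qed
qed

lemma bounded_set:
  assumes "\<And>M. card {j\<in>{1..<M}. P j} \<le> K" and "\<And>j. P j \<Longrightarrow> j \<ge> (1::nat)"
  shows "finite {j. P j} \<and> card {j. P j} \<le> K"
proof -
  have sub: "card F \<le> K" if "F \<subseteq> {j. P j}" "finite F" for F
  proof -
    have "F \<subseteq> {j\<in>{1..<Max F + 1}. P j}"
      using that assms(2) by (auto simp: less_Suc_eq_le)
    then have "card F \<le> card {j\<in>{1..<Max F + 1}. P j}" by (intro card_mono) auto
    then show ?thesis using assms(1) order_trans by blast
  qed
  have fin: "finite {j. P j}"
  proof (rule ccontr)
    assume "infinite {j. P j}"
    then obtain F where F: "F \<subseteq> {j. P j}" "finite F" "card F = K + 1"
      using infinite_arbitrarily_large by blast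
    have "card F \<le> K" using sub[OF F(1) F(2)] .
    then show False using F(3) by simp
  qed
  have "card {j. P j} \<le> K" using sub[OF subset_refl fin] .
  with fin show ?thesis by simp
qed

lemma row_fin: "finite {j. aA n k j}" and row_card: "card {j. aA n k j} \<le> n + 1"
  using bounded_set[of "aA n k" "n+1"] row_prefix aA_pos by auto

lemma col_fin: "finite {i. aA n i l}" and col_card: "card {i. aA n i l} \<le> n + 1"
  using bounded_set[of "\<lambda>i. aA n i l" "n+1"] col_prefix aA_pos by auto

lemma dc: "finite I \<Longrightarrow> finite J \<Longrightarrow>
  (\<Sum>i\<in>I. card {c\<in>J. P i c}) = (\<Sum>c\<in>J. card {i\<in>I. P i c})"
  using sum.swap[where g="\<lambda>i c. if P i c then 1 else (0::nat)" and A=I and B=J]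
  by (simp add: sum_if_card)

lemma UN_bound:
  assumes "finite A" "card A \<le> a" "\<And>x. x \<in> A \<Longrightarrow> finite (B x) \<and> card (B x) \<le> b"
  shows "finite (\<Union>x\<in>A. B x) \<and> card (\<Union>x\<in>A. B x) \<le> a * (b::nat)"
proof -
  have "card (\<Union>x\<in>A. B x) \<le> (\<Sum>x\<in>A. card (B x))" using card_UN_le assms(1) by blast
  also have "\<dots> \<le> card A * b" using sum_bounded_above[of A "\<lambda>x. card (B x)" b] assms(3) by simp
  also have "\<dots> \<le> a * b" using assms(2) by simp
  finally show ?thesis using assms by auto
qed

lemma Q1: "finite (\<Union>j\<in>{j. aA n k j}. \<Union>i\<in>{i. aA n i j}. {c. aA n i c})
  \<and> card (\<Union>j\<in>{j. aA n k j}. \<Union>i\<in>{i. aA n i j}. {c. aA n i c}) \<le> (n+1)*((n+1)*(n+1))"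
  apply (rule UN_bound)
  using row_fin row_card apply auto[2]
  apply (rule UN_bound)
  using row_fin row_card col_fin col_card by auto

lemma Q2: "finite (\<Union>i\<in>{i. aA n i j}. \<Union>c\<in>{c. aA n i c}. {i'. aA n i' c})
  \<and> card (\<Union>i\<in>{i. aA n i j}. \<Union>c\<in>{c. aA n i c}. {i'. aA n i' c}) \<le> (n+1)*((n+1)*(n+1))"
  apply (rule UN_bound)
  using col_fin col_card apply auto[2]
  apply (rule UN_bound)
  using row_fin row_card col_fin col_card by auto

lemma row_exact: assumes "k \<ge> 1" shows "card {j. aA n k j} = n + 1"
proof (rule ccontr)
  assume "card {j. aA n k j} \<noteq> n + 1"
  then have lt: "card {j. aA n k j} < n + 1" using row_card[of n k] by simp
  define U where "U = (\<Union>i\<in>{1..<k}. {j. aA n i j}) \<union> {j. aA n k j}"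
  have fU: "finite U" unfolding U_def using row_fin by auto
  define l where "l = Max (insert 0 U) + 1"
  have big: "u < l" if "u \<in> U" for u
    using fU that unfolding l_def by (simp add: le_imp_less_Suc)
  have lU: "l \<notin> U" using big by blast
  have "aA n k l"
  proof (subst aA_iff, intro conjI)
    show "k \<noteq> 0" using assms by simp
    show "l \<noteq> 0" unfolding l_def by simp
    have "card {j\<in>{1..<l}. aA n k j} \<le> card {j. aA n k j}"
      by (rule card_mono[OF row_fin]) auto
    then show "card {j\<in>{1..<l}. aA n k j} < n + 1" using lt by simp
    have e: "{i\<in>{1..<k}. aA n i l} = {}" using lU unfolding U_def by auto
    show "card {i\<in>{1..<k}. aA n i l} < n + 1" unfolding e by simp
    show "\<not> (\<exists>i\<in>{1..<k}. \<exists>j\<in>{1..<l}. aA n i j \<and> aA n i l \<and> aA n k j)"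
      using lU unfolding U_def by auto
  qed
  then show False using lU unfolding U_def by auto
qed

lemma upper: assumes "aA n k l" shows "l \<le> k + n + (n+1)*((n+1)*(n+1))"
proof -
  define R where "R = {j\<in>{1..<l}. aA n k j}"
  define F where "F = {c\<in>{1..<l}. n+1 \<le> card {i\<in>{1..<k}. aA n i c}}"
  define Q where "Q = (\<Union>j\<in>{j. aA n k j}. \<Union>i\<in>{i. aA n i j}. {c. aA n i c})"
  have kl: "k \<ge> 1" "l \<ge> 1" using aA_pos[OF assms] by auto
  have Rlt: "card R < n + 1" using assms aA_iff[of n k l] unfolding R_def by blast
  have cover: "{1..<l} \<subseteq> R \<union> F \<union> Q"
  proof
    fix c assume c: "c \<in> {1..<l}"
    show "c \<in> R \<union> F \<union> Q"
    proof (rule ccontr)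
      assume nc: "c \<notin> R \<union> F \<union> Q"
      then have na: "\<not> aA n k c" using c unfolding R_def by auto
      have cf: "card {i\<in>{1..<k}. aA n i c} < n + 1" using nc c unfolding F_def by auto
      have "card {j\<in>{1..<c}. aA n k j} \<le> card R"
        unfolding R_def by (rule card_mono) (use c in auto)
      then have "card {j\<in>{1..<c}. aA n k j} < n + 1" using Rlt by simp
      moreover have "k \<noteq> 0" "c \<noteq> 0" using kl c by auto
      ultimately have "\<exists>i\<in>{1..<k}. \<exists>j\<in>{1..<c}. aA n i j \<and> aA n i c \<and> aA n k j"
        using na cf aA_iff[of n k c] by blast
      then obtain i j where "i \<in> {1..<k}" "j \<in> {1..<c}" "aA n i j" "aA n i c" "aA n k j"
        by blast
      then have "c \<in> Q" unfolding Q_def by auto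
      then show False using nc by simp
    qed
  qed
  have Q: "finite Q \<and> card Q \<le> (n+1)*((n+1)*(n+1))" unfolding Q_def using Q1 by blast
  have fF: "finite F" unfolding F_def by simp
  have "(n+1) * card F \<le> (\<Sum>c\<in>F. card {i\<in>{1..<k}. aA n i c})"
    using sum_bounded_below[of F "n+1" "\<lambda>c. card {i\<in>{1..<k}. aA n i c}"] unfolding F_def
    by (simp add: mult.commute)
  also have "\<dots> \<le> (\<Sum>c\<in>{1..<l}. card {i\<in>{1..<k}. aA n i c})"
    by (rule sum_mono2) (auto simp: F_def)
  also have "\<dots> = (\<Sum>i\<in>{1..<k}. card {c\<in>{1..<l}. aA n i c})"
    by (rule dc[symmetric]) auto
  also have "\<dots> \<le> (k - 1) * (n + 1)"
    using sum_bounded_above[of "{1..<k}" "\<lambda>i. card {c\<in>{1..<l}. aA n i c}" "n+1"] row_prefix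
    by simp
  finally have "(n+1) * card F \<le> (n+1) * (k - 1)" by (simp add: mult.commute)
  then have "card F \<le> k - 1" using mult_le_cancel1[of "n+1" "card F" "k-1"] by simp
  have "l - 1 = card {1..<l}" by simp
  also have "\<dots> \<le> card (R \<union> F \<union> Q)" by (rule card_mono) (use cover Q fF R_def in auto)
  also have "\<dots> \<le> card R + card F + card Q" using card_Un_le[of "R \<union> F" Q] card_Un_le[of R F] by linarith
  finally show ?thesis using Rlt Q \<open>card F \<le> k - 1\<close> kl by linarith
qed


lemma lower: assumes "aA n k j" shows "k \<le> j + (n+1) + (n+1)*((n+1)*(n+1))"
proof -
  define U where "U = n + (n+1)*((n+1)*(n+1))"
  define C where "C = {i. aA n i j}"
  define Q where "Q = (\<Union>i\<in>{i. aA n i j}. \<Union>c\<in>{c. aA n i c}. {i'. aA n i' c})"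
  define G where "G = {i\<in>{1..<k}. n+1 \<le> card {c\<in>{1..<j}. aA n i c}}"
  define X where "X = {i\<in>{1..<k}. i + U < j}"
  have kj: "k \<ge> 1" "j \<ge> 1" using aA_pos[OF assms] by auto
  have Clt: "card {i\<in>{1..<k}. aA n i j} < n+1" using assms aA_iff[of n k j] by blast
  have cover: "{1..<k} \<subseteq> C \<union> Q \<union> (G \<union> X)"
  proof
    fix i assume i: "i \<in> {1..<k}"
    show "i \<in> C \<union> Q \<union> (G \<union> X)"
    proof (rule ccontr)
      assume ni: "i \<notin> C \<union> Q \<union> (G \<union> X)"
      then have na: "\<not> aA n i j" unfolding C_def by auto
      have rf: "card {c\<in>{1..<j}. aA n i c} < n+1" using ni i unfolding G_def by auto
      have "card {i'\<in>{1..<i}. aA n i' j} \<le> card {i'\<in>{1..<k}. aA n i' j}"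
        by (rule card_mono) (use i in auto)
      then have cf: "card {i'\<in>{1..<i}. aA n i' j} < n+1" using Clt by simp
      moreover have "i \<noteq> 0" "j \<noteq> 0" using kj i by auto
      ultimately have "\<exists>i'\<in>{1..<i}. \<exists>c\<in>{1..<j}. aA n i' c \<and> aA n i' j \<and> aA n i c"
        using na rf aA_iff[of n i j] by blast
      then have "i \<in> Q" unfolding Q_def by auto
      then show False using ni by simp
    qed
  qed
  have Q: "finite Q \<and> card Q \<le> (n+1)*((n+1)*(n+1))" unfolding Q_def using Q2 by blast
  have C: "finite C \<and> card C \<le> n+1" using col_fin col_card C_def by auto
  have GX: "n+1 \<le> card {c\<in>{1..<j}. aA n i c}" if gxi: "i \<in> G \<union> X" for i
  proof -
    consider "i \<in> G" | "i \<in> X" using gxi by blast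
    then show ?thesis
    proof cases
      case 1 then show ?thesis unfolding G_def by auto
    next
      case 2
      then have i: "i \<ge> 1" "i + U < j" unfolding X_def by auto
      have "{c\<in>{1..<j}. aA n i c} = {c. aA n i c}"
      proof (intro set_eqI iffI)
        fix c assume "c \<in> {c. aA n i c}"
        then have ca: "aA n i c" by simp
        have "c \<le> i + U" using upper[OF ca] unfolding U_def by simp
        moreover have "c \<ge> 1" using aA_pos[OF ca] by simp
        ultimately show "c \<in> {c\<in>{1..<j}. aA n i c}" using ca i by simp
      qed simp
      then show ?thesis using row_exact[of i n] i by simp
    qed
  qed
  have fGX: "finite (G \<union> X)" unfolding G_def X_def by auto
  have "(n+1)*card(G \<union> X) \<le> (\<Sum>i\<in>G \<union> X. card {c\<in>{1..<j}. aA n i c})"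
    using sum_bounded_below[of "G \<union> X" "n+1" "\<lambda>i. card {c\<in>{1..<j}. aA n i c}"] GX
    by (simp add: mult.commute)
  also have "\<dots> \<le> (\<Sum>i\<in>{1..<k}. card {c\<in>{1..<j}. aA n i c})"
    by (rule sum_mono2) (auto simp: G_def X_def)
  also have "\<dots> = (\<Sum>c\<in>{1..<j}. card {i\<in>{1..<k}. aA n i c})" by (rule dc) auto
  also have "\<dots> \<le> (j-1)*(n+1)"
    using sum_bounded_above[of "{1..<j}" "\<lambda>c. card {i\<in>{1..<k}. aA n i c}" "n+1"] col_prefix
    by simp
  finally have "(n+1)*card(G \<union> X) \<le> (n+1)*(j-1)" by (simp add: mult.commute)
  then have gx: "card (G \<union> X) \<le> j-1" using mult_le_cancel1[of "n+1" "card (G \<union> X)" "j-1"] by simp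
  have "k - 1 = card {1..<k}" by simp
  also have "\<dots> \<le> card (C \<union> Q \<union> (G \<union> X))" by (rule card_mono) (use cover Q C fGX in auto)
  also have "\<dots> \<le> card C + card Q + card (G \<union> X)"
    using card_Un_le[of "C \<union> Q" "G \<union> X"] card_Un_le[of C Q] by linarith
  finally show ?thesis using C Q gx kj by linarith
qed

lemma bwidth_ge: assumes "aA n k l" "k > preperiod n" shows "nat \<bar>int l - int k\<bar> \<le> bwidth n"
proof -
  define S where "S = {nat \<bar>int j - int i\<bar> | i j. i \<ge> 1 \<and> j \<ge> 1 \<and> aA n i j \<and> i > preperiod n}"
  define W where "W = (n+1) + (n+1)*((n+1)*(n+1)) + n + (n+1)*((n+1)*(n+1))"
  have "S \<subseteq> {..W}"
  proof
    fix x assume "x \<in> S"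
    then obtain i j where x: "x = nat \<bar>int j - int i\<bar>" "aA n i j" unfolding S_def by auto
    have h1: "j \<le> i + n + (n+1)*((n+1)*(n+1))" using upper[OF x(2)] .
    have h2: "i \<le> j + (n+1) + (n+1)*((n+1)*(n+1))" using lower[OF x(2)] .
    have "\<bar>int j - int i\<bar> \<le> int W" unfolding abs_le_iff W_def using h1 h2 by linarith
    then have "x \<le> W" unfolding x(1) by (simp only: nat_le_iff)
    then show "x \<in> {..W}" by simp
  qed
  then have "finite S" using finite_subset by blast
  moreover have "nat \<bar>int l - int k\<bar> \<in> S" unfolding S_def using assms aA_pos[OF assms(1)] by blast
  ultimately show ?thesis unfolding bwidth_def S_def[symmetric] by simp
qed

lemma inj_aux: fixes X Y I R Pp V :: int assumes "1 \<le> X" "X \<le> Pp" "1 \<le> Y" "Y \<le> Pp" "2*R \<le> Pp"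
 and "(if I - R \<le> X \<and> X \<le> I + R then V + X else if X > I + R then V + X - Pp else V + X + Pp) = (if I - R \<le> Y \<and> Y \<le> I + R then V + Y else if Y > I + R then V + Y - Pp else V + Y + Pp)" shows "X = Y"
  using assms by (simp split: if_splits; linarith)

definition phi :: "nat \<Rightarrow> nat \<Rightarrow> nat \<Rightarrow> nat \<Rightarrow> nat \<Rightarrow> nat" where
  "phi P r v i j = (if int i - int r \<le> int j \<and> int j \<le> int i + int r then v+j
     else if int j > int i + int r then nat (int v + int j - int P) else v+j+P)"

lemma Bmat_phi: "Bmat n P v i j = aA n (v+i) (phi P (P div 2) v i j)"
  unfolding Bmat_def phi_def Let_def
  by (cases "int i - int (P div 2) \<le> int j \<and> int j \<le> int i + int (P div 2)";
      cases "int j > int i + int (P div 2)") simp_all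

lemma phi_int: "P \<le> v \<Longrightarrow> int (phi P r v i j) = (if int i - int r \<le> int j \<and> int j \<le> int i + int r then int v + int j
     else if int j > int i + int r then int v + int j - int P else int v + int j + int P)"
proof -
  assume a: "P \<le> v"
  have "int (nat (int v + int j - int P)) = int v + int j - int P" using a by simp
  then show ?thesis unfolding phi_def
    by (cases "int i - int r \<le> int j \<and> int j \<le> int i + int r"; cases "int j > int i + int r") simp_all
qed

lemma phi_inj: assumes "P \<le> v" "2*r \<le> P" shows "inj_on (phi P r v i) {1..P}"
proof (rule inj_onI)
  fix x y assume xy: "x \<in> {1..P}" "y \<in> {1..P}" "phi P r v i x = phi P r v i y"
  then have "int (phi P r v i x) = int (phi P r v i y)" by simp
  then have e: "(if int i - int r \<le> int x \<and> int x \<le> int i + int r then int v + int x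
     else if int x > int i + int r then int v + int x - int P else int v + int x + int P) =
     (if int i - int r \<le> int y \<and> int y \<le> int i + int r then int v + int y
     else if int y > int i + int r then int v + int y - int P else int v + int y + int P)"
    unfolding phi_int[OF assms(1)] .
  have "int x = int y" by (rule inj_aux[rotated 5, OF e]) (use xy assms in auto)
  then show "x = y" by simp
qed

lemma phi_surj: assumes "P \<le> v" "2*r \<le> P" "1 \<le> i" "i \<le> P" "c \<ge> 1"
  "int c - int (v+i) < int r" "int (v+i) - int c < int r"
  shows "\<exists>j\<in>{1..P}. phi P r v i j = c"
proof -
  have a: "int P \<le> int v" "2 * int r \<le> int P" "1 \<le> int i" "int i \<le> int P" "1 \<le> int c"
    "int c - int v - int i < int r" "int v + int i - int c < int r" using assms by auto
  consider "int c \<le> int v" | "int v < int c \<and> int c \<le> int v + int P" | "int v + int P < int c" by linarith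
  then show ?thesis
  proof cases
    case 1
    define j where "j = nat (int c + int P - int v)"
    have "0 \<le> int c + int P - int v" using a by linarith
    then have j: "int j = int c + int P - int v" unfolding j_def by simp
    have "int j > int i + int r" using j a 1 by linarith
    then have "int (phi P r v i j) = int c" unfolding phi_int[OF assms(1)] j by simp
    then have "phi P r v i j = c" by simp
    moreover have "j \<in> {1..P}" unfolding atLeastAtMost_iff using j a 1 by linarith
    ultimately show ?thesis by blast
  next
    case 2
    define j where "j = nat (int c - int v)"
    have "0 \<le> int c - int v" using a 2 by linarith
    then have j: "int j = int c - int v" unfolding j_def by simp
    have "int i - int r \<le> int j \<and> int j \<le> int i + int r" using j a 2 by linarith
    then have "int (phi P r v i j) = int c" unfolding phi_int[OF assms(1)] j by simp
    then have "phi P r v i j = c" by simp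
    moreover have "j \<in> {1..P}" unfolding atLeastAtMost_iff using j a 2 by linarith
    ultimately show ?thesis by blast
  next
    case 3
    define j where "j = nat (int c - int v - int P)"
    have "0 \<le> int c - int v - int P" using a 3 by linarith
    then have j: "int j = int c - int v - int P" unfolding j_def by simp
    have "int j < int i - int r" using j a 3 by linarith
    then have "int (phi P r v i j) = int c" unfolding phi_int[OF assms(1)] j by simp
    then have "phi P r v i j = c" by simp
    moreover have "j \<in> {1..P}" unfolding atLeastAtMost_iff using j a 3 by linarith
    ultimately show ?thesis by blast
  qed
qed
theorem theorem4p1:
  fixes n m v :: nat
  assumes "n \<ge> 1"
    and "m \<ge> 1"
    and "(period n * m) div 2 > bwidth n"
    and "v \<ge> preperiod n + period n * m"
  shows "\<forall>i\<in>{1..period n * m}.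
           card {j \<in> {1..period n * m}. Bmat n (period n * m) v i j} = n + 1"
proof
  define P where "P = period n * m"
  define r where "r = P div 2"
  fix i assume i: "i \<in> {1..period n * m}"
  then have i1: "1 \<le> i" "i \<le> P" unfolding P_def by auto
  have Pv: "P \<le> v" using assms(4) unfolding P_def by simp
  have rP: "2*r \<le> P" unfolding r_def by simp
  have wr: "bwidth n < r" using assms(3) unfolding r_def P_def by simp
  define A where "A = {j \<in> {1..P}. aA n (v+i) (phi P r v i j)}"
  have eq: "{j \<in> {1..period n * m}. Bmat n (period n * m) v i j} = A"
    unfolding A_def P_def r_def Bmat_phi by simp
  have "phi P r v i ` A = {c. aA n (v+i) c}"
  proof
    show "phi P r v i ` A \<subseteq> {c. aA n (v+i) c}" unfolding A_def by auto
    show "{c. aA n (v+i) c} \<subseteq> phi P r v i ` A"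
    proof
      fix c assume c: "c \<in> {c. aA n (v+i) c}"
      then have ca: "aA n (v+i) c" by simp
      have "v + i > preperiod n" using assms(4) i1 unfolding P_def by linarith
      then have "nat \<bar>int c - int (v+i)\<bar> \<le> bwidth n" using bwidth_ge ca by blast
      then have "\<bar>int c - int (v+i)\<bar> \<le> int (bwidth n)" by (simp only: nat_le_iff)
      then have "int c - int (v+i) < int r" "int (v+i) - int c < int r" using wr unfolding abs_le_iff by linarith+
      then obtain j where "j \<in> {1..P}" "phi P r v i j = c"
        using phi_surj[OF Pv rP i1] aA_pos[OF ca] by blast
      then show "c \<in> phi P r v i ` A" unfolding A_def using ca by auto
    qed
  qed
  moreover have "inj_on (phi P r v i) A" using phi_inj[OF Pv rP] unfolding A_def
    by (rule inj_on_subset) auto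
  ultimately have "card A = card {c. aA n (v+i) c}" using card_image by metis
  also have "\<dots> = n + 1" using row_exact i1 by simp
  finally show "card {j \<in> {1..period n * m}. Bmat n (period n * m) v i j} = n + 1" using eq by simp
qed

end
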